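(* Let $A\in\mathbb{C}^{n\times n}$ be Hermitian with eigenvalues $\lambda_1,\dots,\lambda_n$ contained in $[\lambda_{\min},\lambda_{\max}]$, $\lambda_{\min}<\lambda_{\max}$, and let $l(x)=\frac{2x-\lambda_{\max}-\lambda_{\min}}{\lambda_{\max}-\lambda_{\min}}$. Let $[a,b]\subset[\lambda_{\min},\lambda_{\max}]$ with $a<b$, and set $\alpha=\arccos(l(a))$, $\beta=\arccos(l(b))$. Let $s(x)=1$ for $x\in(a,b)$, $s(x)=\tfrac12$ for $x\in\{a,b\}$, $s(x)=0$ otherwise, and let $P=s(A)$. Let $c_0=\frac1\pi(\alpha-\beta)$, $c_j=\frac{2}{\pi}\cdot\frac{\sin(j\alpha)-\sin(j\beta)}{j}$ ($j\ge1$), and for $m>0$ and integers $k\ge1$ let $d^m_{0,k}=1$, $d^m_{j,k}=\left(\frac{\sin(j\pi/(k+1))}{j\pi/(k+1)}\right)^m$ ($j\ge1$). For an integer $1\le k'\le k$ let \[ \rho^m_{k',k}(x)=\sum_{j=0}^{k'} c_j\,d^m_{j,k}\,T_j(l(x)), \] where $T_j$ is the $j$-th Chebyshev polynomial of the first kind, and let $P'=\rho^m_{k',k}(A)$. Then for every $m>0$, every integer $k\ge1$ and every integer $1\le k'\le k$, \[ \|P-P'\|_2\le \frac{d^m_{k',k}\,J^*}{\pi(k'+1)}+\frac{m\,\mathcal{C}_m\,J^*}{k+1}+\frac{m\pi^2}{3(k+1)^2}, \] where $J^*=\max_{1\le j\le n}J(\arccos(l(\lambda_j)))$, \[ \mathcal{C}_m=\int_0^{\pi}\frac{(\sin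 u)^{m-1}(\sin u-u\cos u)}{u^{m+2}}\,du, \] and for $\theta\in[0,\pi]$ \[ J(\theta)=\begin{cases} \frac{1}{|\sin\frac{\theta+\alpha}{2}|}+\frac{1}{|\sin\frac{\theta-\alpha}{2}|}+\frac{1}{|\sin\frac{\theta+\beta}{2}|}+\frac{1}{|\sin\frac{\theta-\beta}{2}|}, & \theta\ne\alpha,\beta,\\[4pt] \frac{1}{|\sin\alpha|}+\frac{1}{|\sin\frac{\alpha+\beta}{2}|}+\frac{1}{|\sin\frac{\alpha-\beta}{2}|}, & \theta=\alpha,\\[4pt] \frac{1}{|\sin\beta|}+\frac{1}{|\sin\frac{\alpha+\beta}{2}|}+\frac{1}{|\sin\frac{\alpha-\beta}{2}|}, & \theta=\beta. \end{cases} \]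
   Context: For a Hermitian $A=V\Lambda V^*$ and a real function $f$, $f(A)=V f(\Lambda)V^*$. Any term of the form $1/0$ in $J$ is interpreted as $+\infty$, in which case the bound holds trivially. $P$ is the spectral projector onto the invariant subspace for eigenvalues in $[a,b]$ (with weight $\tfrac12$ for eigenvalues equal to $a$ or $b$). *)

theory Defs
  imports "HOL-Analysis.Analysis"
begin

fun cheb_T :: "nat \<Rightarrow> real \<Rightarrow> real" where
  "cheb_T 0 x = 1"
| "cheb_T (Suc 0) x = x"
| "cheb_T (Suc (Suc n)) x = 2 * x * cheb_T (Suc n) x - cheb_T n x"

definition cadj :: "complex ^'n ^'n \<Rightarrow> complex ^'n ^'n" where
  "cadj A = (\<chi> i j. cnj (A $ j $ i))"

definition hermitian_mat :: "complex ^'n ^'n \<Rightarrow> bool" where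
  "hermitian_mat A \<longleftrightarrow> cadj A = A"

definition unitary_mat :: "complex ^'n ^'n \<Rightarrow> bool" where
  "unitary_mat V \<longleftrightarrow> cadj V ** V = mat 1 \<and> V ** cadj V = mat 1"

definition diag_mat :: "('n \<Rightarrow> complex) \<Rightarrow> complex ^'n ^'n" where
  "diag_mat d = (\<chi> i j. if i = j then d i else 0)"

text \<open>Functional calculus: for A = V diag(lam) V^*, f(A) = V diag(f(lam)) V^*.\<close>
definition mat_fun :: "complex ^'n ^'n \<Rightarrow> ('n \<Rightarrow> real) \<Rightarrow> (real \<Rightarrow> real) \<Rightarrow> complex ^'n ^'n" where
  "mat_fun V lam f = V ** diag_mat (\<lambda>i. complex_of_real (f (lam i))) ** cadj V"

definition spec_norm :: "complex ^'n ^'n \<Rightarrow> real" where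
  "spec_norm M = onorm (\<lambda>x. M *v x)"

definition lmap :: "real \<Rightarrow> real \<Rightarrow> real \<Rightarrow> real" where
  "lmap lmin lmax x = (2 * x - lmax - lmin) / (lmax - lmin)"

definition step_s :: "real \<Rightarrow> real \<Rightarrow> real \<Rightarrow> real" where
  "step_s a b x = (if a < x \<and> x < b then 1 else if x = a \<or> x = b then 1/2 else 0)"

definition cheb_c :: "real \<Rightarrow> real \<Rightarrow> nat \<Rightarrow> real" where
  "cheb_c \<alpha> \<beta> j = (if j = 0 then (\<alpha> - \<beta>) / pi
     else 2 / pi * ((sin (real j * \<alpha>) - sin (real j * \<beta>)) / real j))"

definition jackson_d :: "real \<Rightarrow> nat \<Rightarrow> nat \<Rightarrow> real" where
  "jackson_d m j k = (if j = 0 then 1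
     else (sin (real j * pi / real (k + 1)) / (real j * pi / real (k + 1))) powr m)"

definition rho :: "real \<Rightarrow> real \<Rightarrow> real \<Rightarrow> real \<Rightarrow> real \<Rightarrow> nat \<Rightarrow> nat \<Rightarrow> real \<Rightarrow> real" where
  "rho lmin lmax a b m k' k x =
     (\<Sum>j=0..k'. cheb_c (arccos (lmap lmin lmax a)) (arccos (lmap lmin lmax b)) j
                 * jackson_d m j k * cheb_T j (lmap lmin lmax x))"

definition C_const :: "real \<Rightarrow> real" where
  "C_const m = integral {0..pi}
     (\<lambda>u. (sin u) powr (m - 1) * (sin u - u * cos u) / u powr (m + 2))"

text \<open>J(theta), with 1/0 interpreted as +infinity (via ereal, where inverse 0 = infinity).\<close>
definition Jfun :: "real \<Rightarrow> real \<Rightarrow> real \<Rightarrow> ereal" where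
  "Jfun \<alpha> \<beta> \<theta> =
     (if \<theta> = \<alpha> then
        1 / ereal \<bar>sin \<alpha>\<bar> + 1 / ereal \<bar>sin ((\<alpha> + \<beta>) / 2)\<bar> + 1 / ereal \<bar>sin ((\<alpha> - \<beta>) / 2)\<bar>
      else if \<theta> = \<beta> then
        1 / ereal \<bar>sin \<beta>\<bar> + 1 / ereal \<bar>sin ((\<alpha> + \<beta>) / 2)\<bar> + 1 / ereal \<bar>sin ((\<alpha> - \<beta>) / 2)\<bar>
      else
        1 / ereal \<bar>sin ((\<theta> + \<alpha>) / 2)\<bar> + 1 / ereal \<bar>sin ((\<theta> - \<alpha>) / 2)\<bar>
        + 1 / ereal \<bar>sin ((\<theta> + \<beta>) / 2)\<bar> + 1 / ereal \<bar>sin ((\<theta> - \<beta>) / 2)\<bar>)"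

end

theory Submission
  imports Defs
begin

lemma cheb_T_cos_aux: "cheb_T n (cos t) = cos (real n * t) \<and> cheb_T (Suc n) (cos t) = cos (real (Suc n) * t)"
proof (induction n)
  case (Suc n)
  have "cos (real (Suc (Suc n)) * t) = 2 * cos t * cos (real (Suc n) * t) - cos (real n * t)"
    using cos_add[of "real (Suc n) * t" t] cos_diff[of "real (Suc n) * t" t]
    by (simp add: distrib_right algebra_simps)
  then show ?case using Suc by simp
qed auto

lemma cheb_T_cos: "cheb_T n (cos t) = cos (real n * t)"
  using cheb_T_cos_aux by blast

definition G :: "nat \<Rightarrow> real \<Rightarrow> real" where
  "G n x = (\<Sum>j=1..n. sin (real j * x) / real j)"

lemma dirichlet: "2 * sin (x/2) * (1/2 + (\<Sum>j=1..N. cos (real j * x))) = sin ((real N + 1/2) * x)"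
proof (induction N)
  case 0 then show ?case by simp
next
  case (Suc N)
  have e: "2 * sin (x/2) * cos (real (Suc N) * x) = sin ((real (Suc N) + 1/2) * x) - sin ((real N + 1/2) * x)"
    using sin_add[of "real (Suc N) * x" "x/2"] sin_diff[of "real (Suc N) * x" "x/2"]
    by (simp add: algebra_simps)
  show ?case using Suc e by (simp add: algebra_simps)
qed

lemma tail_bound_aux:
  fixes x :: real
  defines "C \<equiv> \<lambda>j::nat. cos ((real j + 1/2) * x)"
  shows "n < N \<Longrightarrow> \<bar>(\<Sum>j=Suc n..N. (C (j-1) - C j) / real j) + C N / real N\<bar> \<le> 2 / real (n+1) - 1 / real N"
proof (induction N)
  case 0 then show ?case by simp
next
  case (Suc N)
  show ?case
  proof (cases "n = N")
    case True
    have "\<bar>C n\<bar> \<le> 1" unfolding C_def by simp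
    then show ?thesis using True by (simp add: abs_divide divide_simps)
  next
    case False
    then have nN: "n < N" using Suc by simp
    have IH: "\<bar>(\<Sum>j=Suc n..N. (C (j-1) - C j) / real j) + C N / real N\<bar> \<le> 2 / real (n+1) - 1 / real N"
      using Suc nN by simp
    have CN: "\<bar>C N\<bar> \<le> 1" unfolding C_def by simp
    have Npos: "real N > 0" using nN by simp
    have eq: "(\<Sum>j=Suc n..Suc N. (C (j-1) - C j) / real j) + C (Suc N) / real (Suc N)
       = ((\<Sum>j=Suc n..N. (C (j-1) - C j) / real j) + C N / real N) - C N * (1 / real N - 1 / real (Suc N))"
      using nN by (simp add: algebra_simps diff_divide_distrib)
    have d: "0 \<le> 1 / real N - 1 / real (Suc N)" using Npos by (simp add: divide_simps)
    have "\<bar>C N * (1 / real N - 1 / real (Suc N))\<bar> \<le> 1 / real N - 1 / real (Suc N)"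
      using CN d by (simp add: abs_mult mult_left_le_one_le)
    then show ?thesis unfolding eq using IH by linarith
  qed
qed

lemma G_tail:
  fixes x :: real
  assumes x: "0 < x" "x < 2*pi" and nN: "n \<le> N"
  shows "\<bar>G N x - G n x\<bar> \<le> 1 / (real (n+1) * sin (x/2))"
proof -
  define C where "C \<equiv> \<lambda>j::nat. cos ((real j + 1/2) * x)"
  have sp: "sin (x/2) > 0" using x by (intro sin_gt_zero) auto
  show ?thesis
  proof (cases "n = N")
    case True then show ?thesis using sp by simp
  next
    case False
    then have nN': "n < N" using nN by simp
    have e1: "2 * sin (x/2) * sin (real j * x) = C (j-1) - C j" if "1 \<le> j" for j
    proof -
      have r: "real (j-1) = real j - 1" using that by simp
      show ?thesis unfolding C_def r
        using cos_add[of "real j * x" "x/2"] cos_diff[of "real j * x" "x/2"]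
        by (simp add: algebra_simps)
    qed
    have "G N x - G n x = (\<Sum>j=Suc n..N. sin (real j * x) / real j)"
    proof -
      obtain p where p: "N = n + p" using nN' less_imp_add_positive by blast
      show ?thesis unfolding G_def p using sum.ub_add_nat[of 1 n "\<lambda>j. sin (real j * x) / real j" p] by simp
    qed
    then have "2 * sin (x/2) * (G N x - G n x) = (\<Sum>j=Suc n..N. (C (j-1) - C j) / real j)"
    proof -
      assume h: "G N x - G n x = (\<Sum>j=Suc n..N. sin (real j * x) / real j)"
      have "2 * sin (x/2) * (G N x - G n x) = (\<Sum>j=Suc n..N. 2 * sin (x/2) * sin (real j * x) / real j)"
        unfolding h sum_distrib_left by (simp add: algebra_simps)
      also have "\<dots> = (\<Sum>j=Suc n..N. (C (j-1) - C j) / real j)"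
        by (rule sum.cong) (auto simp: e1)
      finally show ?thesis .
    qed
    moreover have "\<bar>(\<Sum>j=Suc n..N. (C (j-1) - C j) / real j) + C N / real N\<bar> \<le> 2 / real (n+1) - 1 / real N"
      using tail_bound_aux[OF nN', of x] unfolding C_def by simp
    moreover have "\<bar>C N / real N\<bar> \<le> 1 / real N" unfolding C_def by (simp add: abs_divide divide_right_mono)
    ultimately have "\<bar>2 * sin (x/2) * (G N x - G n x)\<bar> \<le> 2 / real (n+1)" by linarith
    then have "sin (x/2) * \<bar>G N x - G n x\<bar> \<le> 1 / real (n+1)" using sp by (simp add: abs_mult)
    then have "real (n+1) * (sin (x/2) * \<bar>G N x - G n x\<bar>) \<le> 1"
      by (simp add: field_simps del: of_nat_Suc)
    moreover have "real (n+1) * sin (x/2) > 0" using sp by simp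
    ultimately show ?thesis by (simp add: pos_le_divide_eq mult_ac del: of_nat_Suc)
  qed
qed

lemma G_deriv: "DERIV (G N) y :> (\<Sum>j=1..N. cos (real j * y))"
  unfolding G_def[abs_def]
  apply (rule DERIV_sum)
  apply (rule derivative_eq_intros refl)+
  apply auto
  done

lemma alg1:
  fixes s S C c n :: real
  assumes "s > 0" "n \<ge> 0"
  shows "(-1/2 - (S / (2 * s) - 1/2) - ((- S * (n + 1/2)) * ((2 * n + 1) * s) - C * ((2 * n + 1) * (c / 2)))
       / (((2 * n + 1) * s) * ((2 * n + 1) * s)))
     = C * c / (2 * (2 * n + 1) * s\<^sup>2)"
proof -
  define M where "M = 2 * n + 1"
  have M: "M > 0" "n + 1/2 = M/2" using assms unfolding M_def by auto
  have "(-1/2 - (S / (2 * s) - 1/2) - ((- S * (M/2)) * (M * s) - C * (M * (c / 2)))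
       / ((M * s) * (M * s))) = C * c / (2 * M * s\<^sup>2)"
    using M assms(1) by (simp add: field_simps power2_eq_square)
  then show ?thesis unfolding M(2) M_def[symmetric] .
qed

lemma test:
  fixes y :: real and N :: nat
  assumes sp: "sin (y/2) > 0"
  shows "((\<lambda>y. (pi - y)/2 - G N y - cos ((real N + 1/2) * y) / ((2 * real N + 1) * sin (y/2)))
     has_real_derivative (cos ((real N + 1/2) * y) * cos (y/2) / (2 * (2 * real N + 1) * (sin (y/2))\<^sup>2))) (at y)"
proof -
  have d1: "DERIV (\<lambda>y. (pi - y)/2) y :> -1/2"
    by (rule derivative_eq_intros refl)+ (simp_all add: field_simps)
  have d3a: "DERIV (\<lambda>y. cos ((real N + 1/2) * y)) y :> - sin ((real N + 1/2) * y) * (real N + 1/2)"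
    by (rule derivative_eq_intros refl)+ (simp_all add: field_simps)
  have d3b: "DERIV (\<lambda>y. (2 * real N + 1) * sin (y/2)) y :> (2 * real N + 1) * (cos (y/2) / 2)"
    by (auto intro!: derivative_eq_intros)
  have d3: "DERIV (\<lambda>y. cos ((real N + 1/2) * y) / ((2 * real N + 1) * sin (y/2))) y :>
      ((- sin ((real N + 1/2) * y) * (real N + 1/2)) * ((2 * real N + 1) * sin (y/2)) - cos ((real N + 1/2) * y) * ((2 * real N + 1) * (cos (y/2) / 2)))
       / (((2 * real N + 1) * sin (y/2)) * ((2 * real N + 1) * sin (y/2)))"
    by (rule DERIV_divide[OF d3a d3b]) (use sp in simp)
  have D: "DERIV (\<lambda>y. (pi - y)/2 - G N y - cos ((real N + 1/2) * y) / ((2 * real N + 1) * sin (y/2))) y :>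
     (-1/2 - (\<Sum>j=1..N. cos (real j * y)) - ((- sin ((real N + 1/2) * y) * (real N + 1/2)) * ((2 * real N + 1) * sin (y/2)) - cos ((real N + 1/2) * y) * ((2 * real N + 1) * (cos (y/2) / 2)))
       / (((2 * real N + 1) * sin (y/2)) * ((2 * real N + 1) * sin (y/2))))"
    by (intro DERIV_diff d1 d3 G_deriv)
  have ds: "(\<Sum>j=1..N. cos (real j * y)) = sin ((real N + 1/2) * y) / (2 * sin (y/2)) - 1/2"
    using dirichlet[of y N] sp by (simp add: field_simps)
  have "(-1/2 - (\<Sum>j=1..N. cos (real j * y)) - ((- sin ((real N + 1/2) * y) * (real N + 1/2)) * ((2 * real N + 1) * sin (y/2)) - cos ((real N + 1/2) * y) * ((2 * real N + 1) * (cos (y/2) / 2)))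
       / (((2 * real N + 1) * sin (y/2)) * ((2 * real N + 1) * sin (y/2))))
     = cos ((real N + 1/2) * y) * cos (y/2) / (2 * (2 * real N + 1) * (sin (y/2))\<^sup>2)"
    unfolding ds using alg1[OF sp, of "real N"] by simp
  then show ?thesis using D by simp
qed
lemma G_pi: "G N pi = 0"
  unfolding G_def by (simp add: sin_npi mult.commute)

lemma cos_half_odd_pi: "cos ((real N + 1/2) * pi) = 0"
proof -
  have "(real N + 1/2) * pi = real N * pi + pi/2" by (simp add: algebra_simps)
  then show ?thesis by (simp add: cos_add sin_npi)
qed

lemma G_conv_bound:
  fixes x :: real
  assumes x: "0 < x" "x \<le> pi"
  shows "\<bar>(pi - x)/2 - G N x\<bar> \<le> 2 / ((2 * real N + 1) * sin (x/2))"
proof -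
  define M where "M = 2 * real N + 1"
  have M: "M > 0" unfolding M_def by simp
  define F :: "real \<Rightarrow> real" where "F y = (pi - y)/2 - G N y - cos ((real N + 1/2) * y) / ((2 * real N + 1) * sin (y/2))" for y
  define H :: "real \<Rightarrow> real" where "H y = 1 / sin (y/2)" for y
  have sp: "sin (y/2) > 0" if "x \<le> y" "y \<le> pi" for y
    using that x by (intro sin_gt_zero) auto
  have cp: "cos (y/2) \<ge> 0" if "x \<le> y" "y \<le> pi" for y
    using that x by (intro cos_ge_zero) auto
  have dF: "DERIV F y :> cos ((real N + 1/2) * y) * cos (y/2) / (2 * M * (sin (y/2))\<^sup>2)"
    if "x \<le> y" "y \<le> pi" for y
    unfolding F_def[abs_def] M_def using test[OF sp[OF that]] by simp
  have dH: "DERIV H y :> - (cos (y/2) / 2) / (sin (y/2))\<^sup>2"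
    if "x \<le> y" "y \<le> pi" for y
    unfolding H_def[abs_def] using sp[OF that]
    by (auto intro!: derivative_eq_intros simp: power2_eq_square field_simps)
  have P: "F pi + H pi / M \<le> F x + H x / M"
  proof (rule DERIV_nonpos_imp_nonincreasing[of x pi "\<lambda>y. F y + H y / M"])
    show "x \<le> pi" using x by simp
    fix y assume y: "x \<le> y" "y \<le> pi"
    have "DERIV (\<lambda>y. F y + H y / M) y :> cos ((real N + 1/2) * y) * cos (y/2) / (2 * M * (sin (y/2))\<^sup>2)
        + (- (cos (y/2) / 2) / (sin (y/2))\<^sup>2) / M"
      by (intro derivative_intros DERIV_cdivide dF[OF y] dH[OF y])
    moreover have "cos ((real N + 1/2) * y) * cos (y/2) / (2 * M * (sin (y/2))\<^sup>2)
        + (- (cos (y/2) / 2) / (sin (y/2))\<^sup>2) / M = (cos ((real N + 1/2) * y) - 1) * cos (y/2) / (2 * M * (sin (y/2))\<^sup>2)"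
      using M sp[OF y] by (simp add: field_simps)
    moreover have "(cos ((real N + 1/2) * y) - 1) * cos (y/2) / (2 * M * (sin (y/2))\<^sup>2) \<le> 0"
      using M cp[OF y] sp[OF y] by (intro divide_nonpos_pos mult_nonpos_nonneg) auto
    ultimately show "\<exists>d. DERIV (\<lambda>y. F y + H y / M) y :> d \<and> d \<le> 0" by auto
  qed
  have Q: "F x - H x / M \<le> F pi - H pi / M"
  proof (rule DERIV_nonneg_imp_nondecreasing[of x pi "\<lambda>y. F y - H y / M"])
    show "x \<le> pi" using x by simp
    fix y assume y: "x \<le> y" "y \<le> pi"
    have "DERIV (\<lambda>y. F y - H y / M) y :> cos ((real N + 1/2) * y) * cos (y/2) / (2 * M * (sin (y/2))\<^sup>2)
        - (- (cos (y/2) / 2) / (sin (y/2))\<^sup>2) / M"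
      by (intro derivative_intros DERIV_cdivide dF[OF y] dH[OF y])
    moreover have "cos ((real N + 1/2) * y) * cos (y/2) / (2 * M * (sin (y/2))\<^sup>2)
        - (- (cos (y/2) / 2) / (sin (y/2))\<^sup>2) / M = (cos ((real N + 1/2) * y) + 1) * cos (y/2) / (2 * M * (sin (y/2))\<^sup>2)"
      using M sp[OF y] by (simp add: field_simps)
    moreover have "(cos ((real N + 1/2) * y) + 1) * cos (y/2) / (2 * M * (sin (y/2))\<^sup>2) \<ge> 0"
    proof -
      have "cos ((real N + 1/2) * y) + 1 \<ge> 0" using cos_ge_minus_one[of "(real N + 1/2) * y"] by linarith
      then show ?thesis using M cp[OF y] sp[OF y] by (intro divide_nonneg_pos mult_nonneg_nonneg) auto
    qed
    ultimately show "\<exists>d. DERIV (\<lambda>y. F y - H y / M) y :> d \<and> d \<ge> 0" by auto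
  qed
  have Fpi: "F pi = 0" unfolding F_def by (simp add: G_pi cos_half_odd_pi)
  have Hpi: "H pi = 1" unfolding H_def by simp
  have spx: "sin (x/2) > 0" using sp x by simp
  have Hx: "H x > 0" unfolding H_def using spx by simp
  have iM: "1 / M > 0" using M by simp
  have "\<bar>F x\<bar> \<le> H x / M" using P Q iM unfolding Fpi Hpi abs_le_iff by linarith
  moreover have "\<bar>cos ((real N + 1/2) * x) / ((2 * real N + 1) * sin (x/2))\<bar> \<le> H x / M"
    unfolding H_def M_def using spx by (auto simp: abs_divide abs_mult divide_simps)
  moreover have "(pi - x)/2 - G N x = F x + cos ((real N + 1/2) * x) / ((2 * real N + 1) * sin (x/2))"
    unfolding F_def by simp
  ultimately have "\<bar>(pi - x)/2 - G N x\<bar> \<le> 2 * (H x / M)" by linarith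
  then show ?thesis unfolding H_def M_def by (simp add: mult.commute)
qed

lemma G_bound_pos:
  fixes x :: real
  assumes x: "0 < x" "x \<le> pi"
  shows "\<bar>(pi - x)/2 - G n x\<bar> \<le> 1 / (real (n+1) * sin (x/2))"
proof (rule ccontr)
  define b where "b = 1 / (real (n+1) * sin (x/2))"
  assume "\<not> ?thesis"
  then have gt: "\<bar>(pi - x)/2 - G n x\<bar> > b" unfolding b_def by simp
  define e where "e = \<bar>(pi - x)/2 - G n x\<bar> - b"
  have e: "e > 0" using gt unfolding e_def by simp
  have sp: "sin (x/2) > 0" using x by (intro sin_gt_zero) auto
  obtain N0 :: nat where N0: "real N0 > 2 / (sin (x/2) * e)" using reals_Archimedean2 by blast
  define N where "N = max n N0"
  have nN: "n \<le> N" unfolding N_def by simp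
  have "real N \<ge> real N0" unfolding N_def by simp
  then have "real N > 2 / (sin (x/2) * e)" using N0 by simp
  then have "real N * (sin (x/2) * e) > 2" using sp e by (simp add: divide_less_eq mult.commute)
  then have "(2 * real N + 1) * sin (x/2) * e > 2" using sp e
    by (smt (verit) mult_pos_pos mult.assoc mult.commute distrib_right)
  then have small: "2 / ((2 * real N + 1) * sin (x/2)) < e" using sp
    by (simp add: divide_less_eq mult.commute)
  have t1: "\<bar>(pi - x)/2 - G N x\<bar> \<le> 2 / ((2 * real N + 1) * sin (x/2))" by (rule G_conv_bound[OF x])
  have t2: "\<bar>G N x - G n x\<bar> \<le> b" unfolding b_def using G_tail[OF x(1) _ nN] x by simp
  have "\<bar>(pi - x)/2 - G n x\<bar> \<le> \<bar>(pi - x)/2 - G N x\<bar> + \<bar>G N x - G n x\<bar>" by simp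
  then show False using t1 t2 small unfolding e_def by linarith
qed

definition saw :: "real \<Rightarrow> real" where
  "saw x = (if 0 < x \<and> x < 2*pi then (pi - x)/2 else if -2*pi < x \<and> x < 0 then -(pi + x)/2 else 0)"

definition w :: "real \<Rightarrow> real" where
  "w x = (if sin (x/2) = 0 then 0 else 1 / \<bar>sin (x/2)\<bar>)"

lemma G_neg: "G n (-x) = - G n x"
  unfolding G_def by (simp add: sum_negf[symmetric])

lemma sin_j2pi: "sin (real j * (2*pi) - y) = - sin y"
proof -
  have e: "real j * (2*pi) = 2 * real j * pi" by simp
  show ?thesis unfolding e sin_diff sin_2npi cos_2npi by simp
qed

lemma G_refl: "G n (2*pi - y) = - G n y"
  unfolding G_def by (simp add: right_diff_distrib sin_j2pi sum_negf[symmetric] divide_minus_left)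

lemma G_zero: "G n 0 = 0" unfolding G_def by simp
lemma G_2pi: "G n (2*pi) = 0" using G_refl[of n 0] G_zero by simp

lemma saw_bound:
  fixes x :: real
  assumes x: "-2*pi \<le> x" "x \<le> 2*pi"
  shows "\<bar>saw x - G n x\<bar> \<le> w x / real (n+1)"
proof -
  have pos: "\<bar>saw y - G n y\<bar> \<le> w y / real (n+1)" if y: "0 < y" "y < 2*pi" for y
  proof (cases "y \<le> pi")
    case True
    have sp: "sin (y/2) > 0" using y by (intro sin_gt_zero) auto
    show ?thesis using G_bound_pos[OF y(1) True, of n] y sp unfolding saw_def w_def by (simp add: mult.commute)
  next
    case False
    define z where "z = 2*pi - y"
    have z: "0 < z" "z \<le> pi" using y False unfolding z_def by auto
    have sp: "sin (z/2) > 0" using z by (intro sin_gt_zero) auto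
    have yz: "y = 2*pi - z" unfolding z_def by simp
    have sy: "sin (y/2) = sin (z/2)" unfolding yz by (simp add: diff_divide_distrib sin_diff)
    have "\<bar>saw y - G n y\<bar> = \<bar>(pi - z)/2 - G n z\<bar>"
      using y unfolding saw_def yz G_refl by (simp add: abs_minus_commute) argo
    then show ?thesis using G_bound_pos[OF z, of n] sp unfolding w_def sy by (simp add: mult.commute)
  qed
  show ?thesis
  proof (cases "x = 0 \<or> x = 2*pi \<or> x = -2*pi")
    case True
    then show ?thesis unfolding saw_def w_def using G_zero G_2pi G_neg[of n "2*pi"] by auto
  next
    case False
    show ?thesis
    proof (cases "x > 0")
      case True then show ?thesis using pos[of x] x False by simp
    next
      case f2: False
      have "\<bar>saw (-x) - G n (-x)\<bar> \<le> w (-x) / real (n+1)" using pos[of "-x"] x False f2 by simp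
      moreover have "saw (-x) = - saw x" using x False f2 unfolding saw_def by (auto simp: field_simps)
      moreover have "w (-x) = w x" unfolding w_def by simp
      ultimately show ?thesis unfolding G_neg by (simp add: abs_minus_commute)
    qed
  qed
qed

definition sval :: "real \<Rightarrow> real \<Rightarrow> real \<Rightarrow> real" where
  "sval al be t = (if be < t \<and> t < al then 1 else if t = al \<or> t = be then 1/2 else 0)"

definition Kf :: "real \<Rightarrow> real \<Rightarrow> real \<Rightarrow> real" where
  "Kf al be t = w (al + t) + w (al - t) + w (be + t) + w (be - t)"

lemma sval_saw:
  assumes "0 \<le> be" "be < al" "al \<le> pi" "0 \<le> t" "t \<le> pi"
    and "\<not> (t = al \<and> al = pi)" "\<not> (t = be \<and> be = 0)"
  shows "sval al be t = (al - be)/pi + (saw (al + t) + saw (al - t) - saw (be + t) - saw (be - t))/pi"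
proof -
  have p: "pi > 0" by simp
  have "sval al be t * pi = (al - be) + (saw (al + t) + saw (al - t) - saw (be + t) - saw (be - t))"
    using assms p unfolding sval_def saw_def by (auto simp: field_simps)
  then have "sval al be t = ((al - be) + (saw (al + t) + saw (al - t) - saw (be + t) - saw (be - t))) / pi"
    using p by (simp add: eq_divide_eq)
  then show ?thesis by (simp add: add_divide_distrib)
qed

lemma cheb_c_term:
  assumes "1 \<le> j"
  shows "cheb_c al be j * cos (real j * t) =
    (sin (real j * (al + t)) + sin (real j * (al - t))
     - sin (real j * (be + t)) - sin (real j * (be - t))) / real j / pi"
proof -
  have e: "2 * sin A * cos B = sin (A + B) + sin (A - B)" for A B :: real
    by (simp add: sin_add sin_diff)
  have "cheb_c al be j * cos (real j * t) = (2 * sin (real j * al) * cos (real j * t) - 2 * sin (real j * be) * cos (real j * t)) / (pi * real j)"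
    using assms unfolding cheb_c_def by (simp add: field_simps)
  also have "\<dots> = (sin (real j * (al + t)) + sin (real j * (al - t)) - sin (real j * (be + t)) - sin (real j * (be - t))) / (pi * real j)"
    unfolding e by (simp add: distrib_left right_diff_distrib)
  finally show ?thesis by (simp add: mult.commute)
qed

lemma partial_sum:
  "(\<Sum>j=0..n. cheb_c al be j * cos (real j * t)) =
    (al - be)/pi + (G n (al + t) + G n (al - t) - G n (be + t) - G n (be - t))/pi"
proof -
  have "(\<Sum>j=0..n. cheb_c al be j * cos (real j * t)) = cheb_c al be 0 + (\<Sum>j=1..n. cheb_c al be j * cos (real j * t))"
    by (simp add: sum.atLeast_Suc_atMost)
  also have "(\<Sum>j=1..n. cheb_c al be j * cos (real j * t)) =
     (\<Sum>j=1..n. (sin (real j * (al + t)) / real j + sin (real j * (al - t)) / real j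
     - sin (real j * (be + t)) / real j - sin (real j * (be - t)) / real j) / pi)"
    by (rule sum.cong) (auto simp: cheb_c_term add_divide_distrib diff_divide_distrib)
  also have "\<dots> = (G n (al + t) + G n (al - t) - G n (be + t) - G n (be - t))/pi"
    unfolding G_def by (simp add: sum_divide_distrib[symmetric] sum.distrib sum_subtractf)
  finally show ?thesis by (simp add: cheb_c_def)
qed

lemma R_bound:
  assumes "0 \<le> be" "be < al" "al \<le> pi" "0 \<le> t" "t \<le> pi"
    and "\<not> (t = al \<and> al = pi)" "\<not> (t = be \<and> be = 0)"
  shows "\<bar>sval al be t - (\<Sum>j=0..n. cheb_c al be j * cos (real j * t))\<bar> \<le> Kf al be t / (pi * real (n+1))"
proof -
  have p: "pi > 0" by simp
  have eq: "sval al be t - (\<Sum>j=0..n. cheb_c al be j * cos (real j * t)) =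
     ((saw (al + t) - G n (al + t)) + (saw (al - t) - G n (al - t)) - (saw (be + t) - G n (be + t)) - (saw (be - t) - G n (be - t))) / pi"
    unfolding partial_sum sval_saw[OF assms] by (simp add: field_simps)
  have b: "\<bar>saw y - G n y\<bar> \<le> w y / real (n+1)" if "-2*pi \<le> y" "y \<le> 2*pi" for y
    using saw_bound[OF that] .
  have "\<bar>(saw (al + t) - G n (al + t)) + (saw (al - t) - G n (al - t)) - (saw (be + t) - G n (be + t)) - (saw (be - t) - G n (be - t))\<bar>
     \<le> w (al + t) / real (n+1) + w (al - t) / real (n+1) + w (be + t) / real (n+1) + w (be - t) / real (n+1)"
    using b[of "al + t"] b[of "al - t"] b[of "be + t"] b[of "be - t"] assms by auto
  also have "\<dots> = Kf al be t / real (n+1)" unfolding Kf_def by (simp add: add_divide_distrib)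
  finally have "\<bar>(saw (al + t) - G n (al + t)) + (saw (al - t) - G n (al - t)) - (saw (be + t) - G n (be + t)) - (saw (be - t) - G n (be - t))\<bar>
     \<le> Kf al be t / real (n+1)" .
  then have "\<bar>(saw (al + t) - G n (al + t)) + (saw (al - t) - G n (al - t)) - (saw (be + t) - G n (be + t)) - (saw (be - t) - G n (be - t))\<bar> / pi
     \<le> Kf al be t / real (n+1) / pi" using p by (intro divide_right_mono) simp_all
  then show ?thesis unfolding eq by (simp add: abs_divide mult.commute)
qed

definition phi :: "real \<Rightarrow> real \<Rightarrow> real" where
  "phi m u = (sin u / u) powr m"

definition fC :: "real \<Rightarrow> real \<Rightarrow> real" where
  "fC m u = (sin u) powr (m - 1) * (sin u - u * cos u) / u powr (m + 2)"

lemma C_const_fC: "C_const m = integral {0..pi} (fC m)"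
  unfolding C_const_def fC_def[abs_def] by simp

lemma cos_lower: "0 \<le> u \<Longrightarrow> 1 - u^2/2 \<le> cos (u::real)"
proof -
  assume u: "0 \<le> u"
  have "(\<lambda>v. cos v - 1 + v^2/2) 0 \<le> (\<lambda>v. cos v - 1 + v^2/2) u"
  proof (rule DERIV_nonneg_imp_nondecreasing[OF u])
    fix x :: real assume "0 \<le> x" "x \<le> u"
    then show "\<exists>y. DERIV (\<lambda>v. cos v - 1 + v^2/2) x :> y \<and> y \<ge> 0"
      by (intro exI[of _ "- sin x + x"]) (auto intro!: derivative_eq_intros simp: sin_x_le_x)
  qed
  then show ?thesis by simp
qed

lemma sin_lower: "0 \<le> u \<Longrightarrow> u - u^3/6 \<le> sin (u::real)"
proof -
  assume u: "0 \<le> u"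
  have "(\<lambda>v. sin v - v + v^3/6) 0 \<le> (\<lambda>v. sin v - v + v^3/6) u"
  proof (rule DERIV_nonneg_imp_nondecreasing[OF u])
    fix x :: real assume x: "0 \<le> x" "x \<le> u"
    have "cos x - 1 + x^2/2 \<ge> 0" using cos_lower[OF x(1)] by simp
    then show "\<exists>y. DERIV (\<lambda>v. sin v - v + v^3/6) x :> y \<and> y \<ge> 0"
      by (intro exI[of _ "cos x - 1 + x^2/2"]) (auto intro!: derivative_eq_intros simp: power2_eq_square)
  qed
  then show ?thesis by simp
qed

lemma sinmu_nonneg: "0 \<le> u \<Longrightarrow> u \<le> pi \<Longrightarrow> 0 \<le> sin u - u * cos (u::real)"
proof -
  assume u: "0 \<le> u" "u \<le> pi"
  have "(\<lambda>v. sin v - v * cos v) 0 \<le> (\<lambda>v. sin v - v * cos v) u"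
  proof (rule DERIV_nonneg_imp_nondecreasing[OF u(1)])
    fix x :: real assume x: "0 \<le> x" "x \<le> u"
    have "x * sin x \<ge> 0" using x u by (simp add: sin_ge_zero)
    then show "\<exists>y. DERIV (\<lambda>v. sin v - v * cos v) x :> y \<and> y \<ge> 0"
      by (intro exI[of _ "x * sin x"]) (auto intro!: derivative_eq_intros)
  qed
  then show ?thesis by simp
qed

lemma sinmu_le: "0 \<le> u \<Longrightarrow> sin u - u * cos (u::real) \<le> u^3/3"
proof -
  assume u: "0 \<le> u"
  have "(\<lambda>v. v^3/3 - sin v + v * cos v) 0 \<le> (\<lambda>v. v^3/3 - sin v + v * cos v) u"
  proof (rule DERIV_nonneg_imp_nondecreasing[OF u])
    fix x :: real assume x: "0 \<le> x" "x \<le> u"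
    have "x * (x - sin x) \<ge> 0" using x sin_x_le_x[OF x(1)] by simp
    then show "\<exists>y. DERIV (\<lambda>v. v^3/3 - sin v + v * cos v) x :> y \<and> y \<ge> 0"
      by (intro exI[of _ "x * (x - sin x)"]) (auto intro!: derivative_eq_intros simp: power2_eq_square algebra_simps)
  qed
  then show ?thesis by simp
qed

lemma fC_alt:
  assumes "0 < u" "u < pi"
  shows "u * (m * fC m u) = m * (sin u / u) powr (m - 1) * ((sin u - u * cos u) / u^2)"
proof -
  have s: "sin u > 0" using assms by (simp add: sin_gt_zero)
  have "u powr (m + 2) = u powr (m - 1) * u^3"
    using assms powr_add[of u "m - 1" 3] powr_realpow[of u 3] by (simp add: add.commute)
  then show ?thesis unfolding fC_def using assms s
    by (simp add: powr_divide field_simps power2_eq_square power3_eq_cube)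
qed

lemma phi_deriv:
  assumes "0 < u" "u < pi"
  shows "DERIV (phi m) u :> - (u * (m * fC m u))"
proof -
  have s: "sin u > 0" using assms by (simp add: sin_gt_zero)
  have g: "DERIV (\<lambda>v. sin v / v) u :> (cos u * u - sin u) / u^2"
    using assms by (auto intro!: derivative_eq_intros simp: power2_eq_square)
  have "DERIV (\<lambda>v. (sin v / v) powr m) u :> m * (sin u / u) powr (m - 1) * ((cos u * u - sin u) / u^2)"
  proof -
    have "DERIV (\<lambda>v. (sin v / v) powr m) u :> (sin u / u) powr m * (0 * ln (sin u / u) + ((cos u * u - sin u) / u^2) * m / (sin u / u))"
      using has_real_derivative_powr'[OF g DERIV_const[of m "at u"]] s assms by simp
    moreover have "(sin u / u) powr (m - 1) = (sin u / u) powr m / (sin u / u)"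
      using s assms by (simp add: powr_diff)
    ultimately show ?thesis by (simp add: field_simps)
  qed
  then show ?thesis unfolding phi_def[abs_def] fC_alt[OF assms]
    by (rule DERIV_cong) (simp add: algebra_simps diff_divide_distrib)
qed

lemma integrable_open_closed:
  fixes f :: "real \<Rightarrow> real"
  assumes "f integrable_on {a<..<b}"
  shows "f integrable_on {a..b}"
proof -
  have "negligible (({a<..<b} - {a..b}) \<union> ({a..b} - {a<..<b}))"
    by (rule negligible_subset[of "{a,b}"]) auto
  then show ?thesis using integrable_spike_set_eq assms by blast
qed

lemma sin_ne0: "x \<in> {0<..<pi} \<Longrightarrow> sin x \<noteq> 0"
  using sin_gt_zero[of x] by auto

lemma integrable_closed_open:
  fixes f :: "real \<Rightarrow> real"
  assumes "f integrable_on {a..b}"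
  shows "f integrable_on {a<..<b}"
proof -
  have "negligible (({a<..<b} - {a..b}) \<union> ({a..b} - {a<..<b}))"
    by (rule negligible_subset[of "{a,b}"]) auto
  then show ?thesis using integrable_spike_set_eq assms by blast
qed

lemma fC_cont: "continuous_on {0<..<pi} (fC m)"
  unfolding fC_def[abs_def]
  by (intro continuous_intros) (auto dest: sin_ne0)

lemma fC_nonneg: "0 \<le> u \<Longrightarrow> u \<le> pi \<Longrightarrow> 0 \<le> fC m u"
  unfolding fC_def using sinmu_nonneg[of u] by (auto intro!: divide_nonneg_nonneg mult_nonneg_nonneg)

lemma fC_eq2:
  assumes "0 < u" "u < pi" "m > 0"
  shows "fC m u = (sin u / u) powr (m - 1) * ((sin u - u * cos u) / u^3)"
proof -
  have s: "sin u > 0" using assms by (simp add: sin_gt_zero)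
  have "u powr (m + 2) = u powr (m - 1) * u^3"
    using assms powr_add[of u "m - 1" 3] powr_realpow[of u 3] by (simp add: add.commute)
  then show ?thesis unfolding fC_def using assms s
    by (simp add: powr_divide)
qed

lemma fC_bound_A:
  assumes u: "0 < u" "u < pi/2" and m: "m > 0"
  shows "\<bar>fC m u\<bar> \<le> (1 + (1/2) powr (m - 1)) / 3"
proof -
  have upi: "u < pi" using u by simp
  have s: "sin u > 0" using u by (intro sin_gt_zero) auto
  have pa: "pi \<le> 3.1415926535899" using pi_approx by simp
  have u1: "u \<le> 1.58" using u pa by (simp add: power2_eq_square)
  have "u * u \<le> 1.58 * 1.58" using u1 u by (intro mult_mono) auto
  then have u2: "u^2 \<le> 2.5" by (simp add: power2_eq_square)
  have "u - u^3/6 \<le> sin u" using sin_lower u by simp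
  moreover have "u^3 = u * u^2" by (simp add: power3_eq_cube power2_eq_square)
  moreover have "u * u^2 \<le> u * 2.5" using u u2 by (intro mult_left_mono) auto
  ultimately have "u / 2 \<le> sin u" using u(1) by linarith
  then have sl: "1/2 \<le> sin u / u" using u by (simp add: field_simps)
  have su: "sin u / u \<le> 1" using sin_x_le_x[of u] u by simp
  have p1: "(sin u / u) powr (m - 1) \<le> 1 + (1/2) powr (m - 1)"
  proof (cases "m \<ge> 1")
    case True
    then have "(sin u / u) powr (m - 1) \<le> 1 powr (m - 1)" using su s u by (intro powr_mono2) auto
    then have a: "(sin u / u) powr (m - 1) \<le> 1" by simp
    have b: "(1/2::real) powr (m - 1) \<ge> 0" by simp
    show ?thesis using a b by linarith
  next
    case False
    then have "(sin u / u) powr (m - 1) \<le> (1/2) powr (m - 1)" using sl by (intro powr_mono2') auto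
    then show ?thesis by linarith
  qed
  have q0: "0 \<le> (sin u - u * cos u) / u^3" using sinmu_nonneg[of u] u by simp
  have q1: "(sin u - u * cos u) / u^3 \<le> 1/3" using sinmu_le[of u] u by (simp add: divide_simps)
  have "fC m u \<le> (1 + (1/2) powr (m - 1)) * (1/3)"
    unfolding fC_eq2[OF u(1) upi m] using p1 q0 q1 by (intro mult_mono) auto
  moreover have "fC m u \<ge> 0" using fC_nonneg[of u m] u by simp
  ultimately show ?thesis by simp
qed

lemma phi_cont: "continuous_on {pi/2..pi} (phi m)" if "m > 0"
  unfolding phi_def[abs_def]
proof (intro continuous_on_powr' continuous_intros ballI conjI impI)
  fix x assume x: "x \<in> {pi/2..pi}"
  then have "x > 0" using pi_gt_zero by (simp, linarith)
  then show "x \<noteq> 0" by simp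
  show "0 \<le> sin x / x" using x \<open>x > 0\<close> by (simp add: sin_ge_zero)
  show "0 < m" by (rule that)
qed

lemma fC_integrable:
  assumes m: "m > 0"
  shows "fC m integrable_on {0..pi}"
proof (rule Henstock_Kurzweil_Integration.integrable_combine[where a=0 and c="pi/2" and b=pi])
  show "fC m integrable_on {0..pi/2}"
  proof (rule integrable_open_closed, rule measurable_bounded_by_integrable_imp_integrable_real)
    show "fC m \<in> borel_measurable (lebesgue_on {0<..<pi/2})"
      by (rule continuous_imp_measurable_on_sets_lebesgue) (auto intro: continuous_on_subset[OF fC_cont])
    show "(\<lambda>x. (1 + (1/2) powr (m - 1)) / 3) integrable_on {0<..<pi/2}"
      by (rule integrable_closed_open) auto
  qed (use fC_bound_A m in auto)
  show "fC m integrable_on {pi/2..pi}"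
  proof (rule integrable_open_closed, rule measurable_bounded_by_integrable_imp_integrable_real)
    show "fC m \<in> borel_measurable (lebesgue_on {pi/2<..<pi})"
      by (rule continuous_imp_measurable_on_sets_lebesgue) (auto intro: continuous_on_subset[OF fC_cont])
    have "((\<lambda>u. - (u * (m * fC m u))) has_integral (phi m pi - phi m (pi/2))) {pi/2..pi}"
      by (rule fundamental_theorem_of_calculus_interior)
         (auto simp: phi_cont[OF m] has_real_derivative_iff_has_vector_derivative[symmetric] intro!: phi_deriv)
    then have "(\<lambda>u. - (u * (m * fC m u))) integrable_on {pi/2..pi}" by blast
    then have "(\<lambda>u. u * (m * fC m u)) integrable_on {pi/2..pi}"
      using integrable_neg by fastforce
    then have "(\<lambda>u. (2 / (pi * m)) * (u * (m * fC m u))) integrable_on {pi/2..pi}"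
      using m by (subst integrable_on_cmult_iff) auto
    then show "(\<lambda>u. (2 / (pi * m)) * (u * (m * fC m u))) integrable_on {pi/2<..<pi}"
      by (rule integrable_closed_open)
    fix u assume u: "u \<in> {pi/2<..<pi}"
    have f0: "fC m u \<ge> 0" using fC_nonneg[of u m] u by simp
    have "fC m u = (2 / (pi * m)) * ((pi/2) * (m * fC m u))" using m by simp
    also have "\<dots> \<le> (2 / (pi * m)) * (u * (m * fC m u))"
      using u m f0 by (intro mult_left_mono mult_right_mono) auto
    finally show "\<bar>fC m u\<bar> \<le> (2 / (pi * m)) * (u * (m * fC m u))" using f0 by simp
  qed simp
qed auto

lemma phi_drop:
  assumes ab: "0 < a" "a \<le> b" "b < pi" and m: "m > 0"
  shows "0 \<le> phi m a - phi m b" "phi m a - phi m b \<le> b * m * integral {a..b} (fC m)"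
proof -
  have der: "DERIV (phi m) x :> - (x * (m * fC m x))" if "x \<in> {a..b}" for x
    using that ab by (intro phi_deriv) auto
  have hneg: "((\<lambda>u. - (u * (m * fC m u))) has_integral (phi m b - phi m a)) {a..b}"
  proof (rule fundamental_theorem_of_calculus_interior)
    show "continuous_on {a..b} (phi m)"
      by (rule DERIV_continuous_on[OF DERIV_subset[OF der]]) auto
  qed (use ab der in \<open>auto simp: has_real_derivative_iff_has_vector_derivative[symmetric]\<close>)
  have hi: "((\<lambda>u. u * (m * fC m u)) has_integral (phi m a - phi m b)) {a..b}"
    using has_integral_neg[OF hneg] by simp
  have fn: "0 \<le> fC m u" if "u \<in> {a..b}" for u using fC_nonneg[of u m] that ab by auto
  show "0 \<le> phi m a - phi m b"
    by (rule has_integral_nonneg[OF hi]) (use fn ab m in auto)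
  have int: "fC m integrable_on {a..b}"
    by (rule integrable_subinterval_real[OF fC_integrable[OF m]]) (use ab in auto)
  have hi2: "((\<lambda>u. (b * m) * fC m u) has_integral (b * m) * integral {a..b} (fC m)) {a..b}"
    by (rule has_integral_mult_right) (use int in auto)
  show "phi m a - phi m b \<le> b * m * integral {a..b} (fC m)"
  proof (rule has_integral_le[OF hi hi2])
    fix x assume x: "x \<in> {a..b}"
    show "x * (m * fC m x) \<le> b * m * fC m x"
      using fn[OF x] x m by (simp add: mult.assoc mult_right_mono)
  qed
qed

lemma sum_integrals:
  fixes g :: "real \<Rightarrow> real" and u :: "nat \<Rightarrow> real"
  assumes mono: "\<And>j. u j \<le> u (Suc j)" and int: "g integrable_on {u 1..u n}" and n: "1 \<le> n"
  shows "(\<Sum>j=1..<n. integral {u j..u (Suc j)} g) = integral {u 1..u n} g"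
  using n int
proof (induction n)
  case 0 then show ?case by simp
next
  case (Suc n)
  show ?case
  proof (cases "n = 0")
    case True then show ?thesis by simp
  next
    case False
    have m1: "u 1 \<le> u n" using mono False
      using lift_Suc_mono_le[where f=u, OF mono, of 1 n] False by simp
    have m2: "u n \<le> u (Suc n)" by (rule mono)
    have i1: "g integrable_on {u 1..u n}"
      by (rule integrable_subinterval_real[OF Suc.prems(2)]) (use m2 in auto)
    have "(\<Sum>j=1..<Suc n. integral {u j..u (Suc j)} g) = integral {u 1..u n} g + integral {u n..u (Suc n)} g"
      using Suc.IH[OF _ i1] False by simp
    also have "\<dots> = integral {u 1..u (Suc n)} g"
      using Henstock_Kurzweil_Integration.integral_combine[OF m1 m2 Suc.prems(2)] by simp
    finally show ?thesis .
  qed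
qed

lemma jd_phi: "1 \<le> j \<Longrightarrow> jackson_d m j k = phi m (real j * pi / real (k+1))"
  unfolding jackson_d_def phi_def by simp

lemma jd_nonneg: "0 \<le> jackson_d m j k"
  unfolding jackson_d_def by simp

lemma jd_pos:
  assumes "1 \<le> j" "j \<le> k"
  shows "0 < jackson_d m j k"
proof -
  have jk: "real j < real (k+1)" using assms by simp
  have u: "0 < real j * pi / real (k+1)" "real j * pi / real (k+1) < pi"
    using assms jk by (auto simp: divide_less_eq)
  have "sin (real j * pi / real (k+1)) > 0" using u by (intro sin_gt_zero)
  then show ?thesis using assms u unfolding jackson_d_def by simp
qed

lemma jd_one:
  assumes m: "m > 0" and k: "1 \<le> k"
  shows "1 - jackson_d m 1 k \<le> m * pi^2 / (3 * real (k+1)^2)"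
proof -
  define h where "h = pi / real (k+1)"
  have h: "0 < h" "h \<le> pi/2" using k unfolding h_def by (auto simp: field_simps)
  define x where "x = sin h / h"
  have jd: "jackson_d m 1 k = x powr m" unfolding jackson_d_def x_def h_def by simp
  have pa: "pi \<le> 3.1415926535899" using pi_approx by simp
  have u1: "h \<le> 1.58" using h pa by simp
  have "h * h \<le> 1.58 * 1.58" using u1 h by (intro mult_mono) auto
  then have h2: "h^2 \<le> 2.5" by (simp add: power2_eq_square)
  have sl: "h - h^3/6 \<le> sin h" using sin_lower h by simp
  have x1: "1 - h^2/6 \<le> x" unfolding x_def using sl h
    by (simp add: field_simps power3_eq_cube power2_eq_square)
  have xh: "x \<ge> 1/2" using x1 h2 by linarith
  have xpos: "x > 0" using xh by simp
  have "x powr m = exp (m * ln x)" using xpos by (simp add: powr_def)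
  then have e1: "1 + m * ln x \<le> x powr m" using exp_ge_add_one_self[of "m * ln x"] by simp
  have "ln (1/x) \<le> 1/x - 1" using xpos by (intro ln_le_minus_one) simp
  then have l: "- ln x \<le> 1/x - 1" using xpos by (simp add: ln_div)
  have "1/x - 1 = (1 - x)/x" using xpos by (simp add: field_simps)
  also have "\<dots> \<le> (1 - x) / (1/2)"
  proof -
    have "x \<le> 1" unfolding x_def using sin_x_le_x[of h] h by simp
    then show ?thesis using xh xpos by (intro divide_left_mono) auto
  qed
  also have "\<dots> \<le> h^2/3" using x1 by simp
  finally have l2: "- ln x \<le> h^2/3" using l by linarith
  have "1 - x powr m \<le> m * (- ln x)" using e1 by simp
  also have "\<dots> \<le> m * (h^2/3)" using l2 m by (intro mult_left_mono) auto
  also have "\<dots> = m * pi^2 / (3 * real (k+1)^2)" unfolding h_def by (simp add: power_divide)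
  finally show ?thesis unfolding jd .
qed

lemma jd_drop:
  assumes m: "m > 0" and j: "1 \<le> j" "Suc j \<le> k"
  shows "0 \<le> jackson_d m j k - jackson_d m (Suc j) k"
    "jackson_d m j k - jackson_d m (Suc j) k \<le> real (Suc j) * pi / real (k+1) * m *
        integral {real j * pi / real (k+1)..real (Suc j) * pi / real (k+1)} (fC m)"
proof -
  have a: "0 < real j * pi / real (k+1)" using j by simp
  have b: "real j * pi / real (k+1) \<le> real (Suc j) * pi / real (k+1)"
    by (intro divide_right_mono mult_right_mono) auto
  have c: "real (Suc j) * pi / real (k+1) < pi" using j by (simp add: field_simps)
  show "0 \<le> jackson_d m j k - jackson_d m (Suc j) k"
    using phi_drop(1)[OF a b c m] j by (simp add: jd_phi)
  show "jackson_d m j k - jackson_d m (Suc j) k \<le> real (Suc j) * pi / real (k+1) * m *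
        integral {real j * pi / real (k+1)..real (Suc j) * pi / real (k+1)} (fC m)"
    using phi_drop(2)[OF a b c m] j by (simp add: jd_phi del: of_nat_Suc)
qed

lemma jd_sum:
  assumes m: "m > 0" and k: "1 \<le> k'" "k' \<le> k"
  shows "(\<Sum>j=1..<k'. (jackson_d m j k - jackson_d m (Suc j) k) / real (Suc j)) \<le> pi * m * C_const m / real (k+1)"
proof -
  define u where "u j = real j * pi / real (k+1)" for j
  have mono: "u j \<le> u (Suc j)" for j unfolding u_def by (intro divide_right_mono mult_right_mono) auto
  have "real k' * pi \<le> real (k+1) * pi" using k by (intro mult_right_mono) auto
  then have ukp: "u k' \<le> pi" unfolding u_def by (simp add: divide_le_eq del: of_nat_Suc)
  have u10: "0 \<le> u 1" unfolding u_def by simp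
  have u1k: "u 1 \<le> u k'" unfolding u_def using k by (intro divide_right_mono mult_right_mono) auto
  have "(\<Sum>j=1..<k'. (jackson_d m j k - jackson_d m (Suc j) k) / real (Suc j))
     \<le> (\<Sum>j=1..<k'. pi / real (k+1) * m * integral {u j..u (Suc j)} (fC m))"
  proof (rule sum_mono)
    fix j assume j: "j \<in> {1..<k'}"
    then have j1: "1 \<le> j" "Suc j \<le> k" using k by auto
    have "(jackson_d m j k - jackson_d m (Suc j) k) / real (Suc j) \<le>
       (real (Suc j) * pi / real (k+1) * m * integral {u j..u (Suc j)} (fC m)) / real (Suc j)"
      using jd_drop(2)[OF m j1] unfolding u_def by (intro divide_right_mono) auto
    also have "\<dots> = pi / real (k+1) * m * integral {u j..u (Suc j)} (fC m)"
      by (simp add: field_simps del: of_nat_Suc)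
    finally show "(jackson_d m j k - jackson_d m (Suc j) k) / real (Suc j) \<le> pi / real (k+1) * m * integral {u j..u (Suc j)} (fC m)" .
  qed
  also have "\<dots> = pi / real (k+1) * m * (\<Sum>j=1..<k'. integral {u j..u (Suc j)} (fC m))"
    by (simp add: sum_distrib_left)
  also have "(\<Sum>j=1..<k'. integral {u j..u (Suc j)} (fC m)) = integral {u 1..u k'} (fC m)"
  proof (rule sum_integrals[where u=u and g="fC m" and n=k', OF mono _ k(1)])
    show "fC m integrable_on {u 1..u k'}"
      by (rule integrable_subinterval_real[OF fC_integrable[OF m]])
         (use ukp u10 u1k in auto)
  qed
  also have "integral {u 1..u k'} (fC m) \<le> integral {0..pi} (fC m)"
  proof (rule integral_subset_le)
    show "{u 1..u k'} \<subseteq> {0..pi}" using ukp u10 by auto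
    show "fC m integrable_on {u 1..u k'}"
      by (rule integrable_subinterval_real[OF fC_integrable[OF m]])
         (use ukp u10 u1k in auto)
    show "fC m integrable_on {0..pi}" by (rule fC_integrable[OF m])
  qed (auto intro: fC_nonneg)
  then have "pi / real (k+1) * m * integral {u 1..u k'} (fC m) \<le> pi / real (k+1) * m * integral {0..pi} (fC m)"
    using m by (intro mult_left_mono) auto
  finally show ?thesis unfolding C_const_fC by simp
qed

lemma abel:
  fixes a d :: "nat \<Rightarrow> real" and s :: real
  assumes "d 0 = 1"
  shows "s - (\<Sum>j=0..n. d j * a j) = (\<Sum>j<n. (d j - d (Suc j)) * (s - (\<Sum>i=0..j. a i))) + d n * (s - (\<Sum>i=0..n. a i))"
proof (induction n)
  case 0 then show ?case using assms by simp
next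
  case (Suc n)
  then show ?case by (simp add: algebra_simps)
qed

lemma w_nonneg: "0 \<le> w x" unfolding w_def by simp
lemma Kf_nonneg: "0 \<le> Kf al be t" unfolding Kf_def using w_nonneg by (simp add: add_nonneg_nonneg)

lemma jd1_le1: "jackson_d m 1 k \<le> 1" if "m > 0"
proof -
  have h: "0 < pi / real (k+1)" by simp
  have "sin (pi / real (k+1)) / (pi / real (k+1)) \<le> 1"
    using sin_x_le_x[of "pi / real (k+1)"] h by (subst divide_le_eq_1_pos[OF h]) simp
  moreover have "sin (pi / real (k+1)) \<ge> 0"
    by (rule sin_ge_zero) (auto simp: divide_le_eq)
  ultimately have "(sin (pi / real (k+1)) / (pi / real (k+1))) powr m \<le> 1 powr m"
    using that h by (intro powr_mono2) auto
  then show ?thesis unfolding jackson_d_def by simp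
qed

lemma scalar_bound:
  assumes m: "m > 0" and k: "1 \<le> k'" "k' \<le> k"
    and ab: "0 \<le> be" "be < al" "al \<le> pi" and t: "0 \<le> t" "t \<le> pi"
    and ex: "\<not> (t = al \<and> al = pi)" "\<not> (t = be \<and> be = 0)"
  shows "\<bar>sval al be t - (\<Sum>j=0..k'. cheb_c al be j * jackson_d m j k * cos (real j * t))\<bar>
    \<le> jackson_d m k' k * Kf al be t / (pi * real (k'+1)) + m * C_const m * Kf al be t / real (k+1)
       + m * pi^2 / (3 * real (k+1)^2)"
proof -
  define d where "d j = jackson_d m j k" for j
  define a where "a j = cheb_c al be j * cos (real j * t)" for j
  define s where "s = sval al be t"
  define K where "K = Kf al be t"
  define R where "R j = s - (\<Sum>i=0..j. a i)" for j
  have d0: "d 0 = 1" unfolding d_def jackson_d_def by simp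
  have Rb: "\<bar>R j\<bar> \<le> K / (pi * real (j+1))" for j
    unfolding R_def s_def a_def K_def by (rule R_bound[OF ab t ex])
  have K0: "0 \<le> K" unfolding K_def by (rule Kf_nonneg)
  have eq: "s - (\<Sum>j=0..k'. cheb_c al be j * jackson_d m j k * cos (real j * t))
     = (\<Sum>j<k'. (d j - d (Suc j)) * R j) + d k' * R k'"
    using abel[of d s a k', OF d0] unfolding R_def a_def d_def by (simp add: mult_ac)
  have R0: "\<bar>R 0\<bar> \<le> 1"
  proof -
    have "0 \<le> s" "s \<le> 1" unfolding s_def sval_def by auto
    moreover have "0 \<le> (al - be) / pi" "(al - be) / pi \<le> 1" using ab by auto
    moreover have "R 0 = s - (al - be) / pi" unfolding R_def a_def cheb_c_def by simp
    ultimately show ?thesis by linarith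
  qed
  have sumsplit: "(\<Sum>j<k'. (d j - d (Suc j)) * R j) = (d 0 - d 1) * R 0 + (\<Sum>j=1..<k'. (d j - d (Suc j)) * R j)"
  proof -
    have "{..<k'} = insert 0 {1..<k'}" using k by auto
    then show ?thesis by simp
  qed
  have t0: "\<bar>(d 0 - d 1) * R 0\<bar> \<le> m * pi^2 / (3 * real (k+1)^2)"
  proof -
    have "0 \<le> d 0 - d 1" using jd1_le1[OF m] d0 unfolding d_def by simp
    then have "\<bar>(d 0 - d 1) * R 0\<bar> \<le> (d 0 - d 1) * 1" using R0 unfolding abs_mult by (simp add: mult_left_le)
    also have "\<dots> \<le> m * pi^2 / (3 * real (k+1)^2)" using jd_one[OF m] k d0 unfolding d_def by simp
    finally show ?thesis .
  qed
  have t1: "\<bar>\<Sum>j=1..<k'. (d j - d (Suc j)) * R j\<bar> \<le> m * C_const m * K / real (k+1)"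
  proof -
    have "\<bar>\<Sum>j=1..<k'. (d j - d (Suc j)) * R j\<bar> \<le> (\<Sum>j=1..<k'. \<bar>(d j - d (Suc j)) * R j\<bar>)"
      by (rule sum_abs)
    also have "\<dots> \<le> (\<Sum>j=1..<k'. (K / pi) * ((d j - d (Suc j)) / real (Suc j)))"
    proof (rule sum_mono)
      fix j assume j: "j \<in> {1..<k'}"
      have dd: "0 \<le> d j - d (Suc j)" unfolding d_def using jd_drop(1)[OF m, of j k] j k by auto
      have "\<bar>(d j - d (Suc j)) * R j\<bar> = (d j - d (Suc j)) * \<bar>R j\<bar>" using dd by (simp add: abs_mult)
      also have "\<dots> \<le> (d j - d (Suc j)) * (K / (pi * real (j+1)))"
        by (rule mult_left_mono[OF Rb dd])
      also have "\<dots> = (K / pi) * ((d j - d (Suc j)) / real (Suc j))" by simp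
      finally show "\<bar>(d j - d (Suc j)) * R j\<bar> \<le> (K / pi) * ((d j - d (Suc j)) / real (Suc j))" .
    qed
    also have "\<dots> = (K / pi) * (\<Sum>j=1..<k'. (d j - d (Suc j)) / real (Suc j))"
      by (simp add: sum_distrib_left)
    also have "\<dots> \<le> (K / pi) * (pi * m * C_const m / real (k+1))"
      using jd_sum[OF m k] K0 unfolding d_def by (intro mult_left_mono) auto
    also have "\<dots> = m * C_const m * K / real (k+1)" by simp
    finally show ?thesis .
  qed
  have t2: "\<bar>d k' * R k'\<bar> \<le> jackson_d m k' k * K / (pi * real (k'+1))"
  proof -
    have "0 \<le> d k'" unfolding d_def by (rule jd_nonneg)
    then have "\<bar>d k' * R k'\<bar> \<le> d k' * (K / (pi * real (k'+1)))"
      unfolding abs_mult using mult_left_mono[OF Rb[of k'] \<open>0 \<le> d k'\<close>] by simp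
    then show ?thesis unfolding d_def by simp
  qed
  have E: "sval al be t - (\<Sum>j=0..k'. cheb_c al be j * jackson_d m j k * cos (real j * t))
     = (d 0 - d 1) * R 0 + (\<Sum>j=1..<k'. (d j - d (Suc j)) * R j) + d k' * R k'"
    using eq sumsplit unfolding s_def by simp
  have "\<bar>(d 0 - d 1) * R 0 + (\<Sum>j=1..<k'. (d j - d (Suc j)) * R j) + d k' * R k'\<bar>
     \<le> \<bar>(d 0 - d 1) * R 0\<bar> + \<bar>\<Sum>j=1..<k'. (d j - d (Suc j)) * R j\<bar> + \<bar>d k' * R k'\<bar>"
    by (smt (verit) abs_triangle_ineq)
  then show ?thesis unfolding E K_def[symmetric] using t0 t1 t2 by linarith
qed

lemma norm_sq_vec: "(norm (z :: complex ^'n))^2 = (\<Sum>i\<in>UNIV. (cmod (z $ i))^2)"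
  unfolding norm_vec_def L2_set_def by (simp add: sum_nonneg)

lemma unitary_norm:
  fixes V :: "complex ^'n ^'n"
  assumes U: "cadj V ** V = mat 1"
  shows "norm (V *v z) = norm z"
proof -
  have U': "(\<Sum>i\<in>UNIV. cnj (V $ i $ l) * V $ i $ j) = (if l = j then 1 else 0)" for l j
  proof -
    have "(cadj V ** V) $ l $ j = (if l = j then 1 else 0)" unfolding U by (simp add: mat_def)
    then show ?thesis unfolding matrix_matrix_mult_def cadj_def by simp
  qed
  have "complex_of_real (\<Sum>i\<in>UNIV. (cmod ((V *v z) $ i))^2) = (\<Sum>i\<in>UNIV. (V *v z) $ i * cnj ((V *v z) $ i))"
    by (simp only: of_real_sum complex_norm_square)
  also have "\<dots> = (\<Sum>i\<in>UNIV. (\<Sum>j\<in>UNIV. V $ i $ j * z $ j) * (\<Sum>l\<in>UNIV. cnj (V $ i $ l) * cnj (z $ l)))"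
    by (simp add: matrix_vector_mult_def cnj_sum)
  also have "\<dots> = (\<Sum>i\<in>UNIV. \<Sum>j\<in>UNIV. \<Sum>l\<in>UNIV. (z $ j * cnj (z $ l)) * (cnj (V $ i $ l) * V $ i $ j))"
    by (simp add: sum_product mult_ac)
  also have "\<dots> = (\<Sum>j\<in>UNIV. \<Sum>l\<in>UNIV. \<Sum>i\<in>UNIV. (z $ j * cnj (z $ l)) * (cnj (V $ i $ l) * V $ i $ j))"
    by (subst sum.swap) (rule sum.cong[OF refl], rule sum.swap)
  also have "\<dots> = (\<Sum>j\<in>UNIV. \<Sum>l\<in>UNIV. (z $ j * cnj (z $ l)) * (if l = j then 1 else 0))"
    by (simp add: sum_distrib_left[symmetric] U')
  also have "\<dots> = (\<Sum>j\<in>UNIV. z $ j * cnj (z $ j))"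
    by (simp add: if_distrib cong: if_cong)
  also have "\<dots> = complex_of_real (\<Sum>j\<in>UNIV. (cmod (z $ j))^2)"
    by (simp only: of_real_sum complex_norm_square)
  finally have "(\<Sum>i\<in>UNIV. (cmod ((V *v z) $ i))^2) = (\<Sum>j\<in>UNIV. (cmod (z $ j))^2)"
    using of_real_eq_iff by blast
  then have "(norm (V *v z))^2 = (norm z)^2" unfolding norm_sq_vec .
  then show ?thesis by (simp add: power2_eq_iff_nonneg)
qed

lemma diag_mult: "diag_mat d *v y = (\<chi> i. d i * y $ i)"
proof -
  have "(\<Sum>j\<in>UNIV. (if i = j then d i else 0) * y $ j) = d i * y $ i" for i
  proof -
    have "(\<Sum>j\<in>UNIV. (if i = j then d i else 0) * y $ j) = (\<Sum>j\<in>UNIV. if i = j then d i * y $ j else 0)"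
      by (rule sum.cong) auto
    also have "\<dots> = d i * y $ i" by (simp add: sum.delta)
    finally show ?thesis .
  qed
  then show ?thesis unfolding diag_mat_def matrix_vector_mult_def by (simp add: vec_eq_iff)
qed

lemma diag_norm:
  assumes "\<And>i. cmod (d i) \<le> B"
  shows "norm (diag_mat d *v y) \<le> B * norm y"
proof -
  have B: "0 \<le> B" using assms[of undefined] norm_ge_zero order_trans by blast
  have "(norm (diag_mat d *v y))^2 = (\<Sum>i\<in>UNIV. (cmod (d i * y $ i))^2)"
    unfolding norm_sq_vec diag_mult by simp
  also have "\<dots> \<le> (\<Sum>i\<in>UNIV. B^2 * (cmod (y $ i))^2)"
    by (intro sum_mono) (auto simp: norm_mult power_mult_distrib intro!: mult_right_mono power_mono assms)
  also have "\<dots> = (B * norm y)^2" unfolding power_mult_distrib norm_sq_vec by (simp add: sum_distrib_left)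
  finally show ?thesis using B by (simp add: power2_le_iff_abs_le)  
qed

lemma spec_norm_bound:
  fixes V :: "complex ^'n ^'n"
  assumes U: "unitary_mat V" and b: "\<And>i. \<bar>f (lam i) - g (lam i)\<bar> \<le> B"
  shows "spec_norm (mat_fun V lam f - mat_fun V lam g) \<le> B"
  unfolding spec_norm_def
proof (rule onorm_le)
  fix x :: "complex ^'n"
  have U1: "cadj V ** V = mat 1" and U2: "cadj (cadj V) ** cadj V = mat 1"
    using U unfolding unitary_mat_def cadj_def by (auto simp: vec_eq_iff)
  define D where "D = diag_mat (\<lambda>i. complex_of_real (f (lam i) - g (lam i)))"
  have "(mat_fun V lam f - mat_fun V lam g) *v x = V *v (D *v (cadj V *v x))"
  proof -
    let ?F = "diag_mat (\<lambda>i. complex_of_real (f (lam i)))"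
    let ?G = "diag_mat (\<lambda>i. complex_of_real (g (lam i)))"
    let ?y = "cadj V *v x"
    have a1: "(V ** ?F ** cadj V) *v x = V *v (?F *v ?y)" by (simp add: matrix_vector_mul_assoc matrix_mul_assoc)
    have a2: "(V ** ?G ** cadj V) *v x = V *v (?G *v ?y)" by (simp add: matrix_vector_mul_assoc matrix_mul_assoc)
    have a3: "?F *v ?y - ?G *v ?y = D *v ?y"
      unfolding D_def diag_mult by (simp add: vec_eq_iff left_diff_distrib)
    have "(V ** ?F ** cadj V - V ** ?G ** cadj V) *v x = V *v (?F *v ?y) - V *v (?G *v ?y)"
      by (simp only: matrix_vector_mult_diff_rdistrib a1 a2)
    also have "\<dots> = V *v (D *v ?y)" by (simp only: matrix_vector_mult_diff_distrib[symmetric] a3)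
    finally show ?thesis unfolding mat_fun_def .
  qed
  then have "norm ((mat_fun V lam f - mat_fun V lam g) *v x) = norm (D *v (cadj V *v x))"
    using unitary_norm[OF U1] by simp
  also have "\<dots> \<le> B * norm (cadj V *v x)" unfolding D_def by (rule diag_norm) (metis b norm_of_real of_real_diff)
  also have "norm (cadj V *v x) = norm x" using unitary_norm[OF U2] .
  finally show "norm ((mat_fun V lam f - mat_fun V lam g) *v x) \<le> B * norm x" .
qed

lemma inv_ereal: "1 / ereal c = (if c = 0 then \<infinity> else ereal (1/c))"
  using ereal_divide[of 1 c] by (simp add: one_ereal_def)

lemma inv_ereal_nonneg: "0 \<le> c \<Longrightarrow> 0 \<le> 1 / ereal c"
  unfolding inv_ereal by simp

lemma w_le: "\<bar>sin (x/2)\<bar> = c \<Longrightarrow> ereal (w x) \<le> 1 / ereal c"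
  unfolding inv_ereal w_def by auto

lemma w0: "w 0 = 0" unfolding w_def by simp

lemma Kf_le_J:
  assumes "0 \<le> be" "be < al" "al \<le> pi"
  shows "ereal (Kf al be t) \<le> Jfun al be t"
proof -
  have s1: "\<bar>sin (x/2)\<bar> = \<bar>sin (y/2)\<bar>" if "x = - y" for x y :: real
    using that by simp
  show ?thesis
  proof (cases "t = al")
    case True
    have "ereal (Kf al be t) = ereal (w (al + al)) + ereal (w (be + al)) + ereal (w (be - al))"
      unfolding Kf_def True by (simp add: w0)
    also have "\<dots> \<le> 1 / ereal \<bar>sin al\<bar> + 1 / ereal \<bar>sin ((al + be) / 2)\<bar> + 1 / ereal \<bar>sin ((al - be) / 2)\<bar>"
    proof (intro add_mono w_le)
      show "\<bar>sin ((be - al) / 2)\<bar> = \<bar>sin ((al - be) / 2)\<bar>"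
        using s1[of "be - al" "al - be"] by simp
    qed (auto simp: add.commute)
    finally show ?thesis unfolding Jfun_def using True by simp
  next
    case False
    show ?thesis
    proof (cases "t = be")
      case True
      have "ereal (Kf al be t) = ereal (w (al + be)) + ereal (w (al - be)) + ereal (w (be + be))"
        unfolding Kf_def True by (simp add: w0)
      also have "\<dots> \<le> 1 / ereal \<bar>sin ((al + be) / 2)\<bar> + 1 / ereal \<bar>sin ((al - be) / 2)\<bar> + 1 / ereal \<bar>sin be\<bar>"
        by (intro add_mono w_le) auto
      also have "\<dots> = 1 / ereal \<bar>sin be\<bar> + 1 / ereal \<bar>sin ((al + be) / 2)\<bar> + 1 / ereal \<bar>sin ((al - be) / 2)\<bar>"
        by (simp add: ac_simps)
      finally show ?thesis unfolding Jfun_def using True False by simp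
    next
      case F2: False
      have "ereal (Kf al be t) = ereal (w (al + t)) + ereal (w (al - t)) + ereal (w (be + t)) + ereal (w (be - t))"
        unfolding Kf_def by simp
      also have "\<dots> \<le> 1 / ereal \<bar>sin ((t + al) / 2)\<bar> + 1 / ereal \<bar>sin ((t - al) / 2)\<bar>
        + 1 / ereal \<bar>sin ((t + be) / 2)\<bar> + 1 / ereal \<bar>sin ((t - be) / 2)\<bar>"
      proof (intro add_mono w_le)
        show "\<bar>sin ((al - t) / 2)\<bar> = \<bar>sin ((t - al) / 2)\<bar>" using s1[of "al - t" "t - al"] by simp
        show "\<bar>sin ((be - t) / 2)\<bar> = \<bar>sin ((t - be) / 2)\<bar>" using s1[of "be - t" "t - be"] by simp
      qed (auto simp: add.commute)
      finally show ?thesis unfolding Jfun_def using F2 False by simp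
    qed
  qed
qed

lemma J_infty:
  assumes "be < al" and "(t = al \<and> al = pi) \<or> (t = be \<and> be = 0)"
  shows "Jfun al be t = \<infinity>"
proof -
  have n: "0 \<le> 1 / ereal \<bar>x\<bar>" for x by (rule inv_ereal_nonneg) simp
  show ?thesis
  proof (cases "t = al \<and> al = pi")
    case True
    then show ?thesis unfolding Jfun_def using n by (simp add: inv_ereal)
  next
    case False
    then have "t = be" "be = 0" "t \<noteq> al" using assms by auto
    then show ?thesis unfolding Jfun_def using n by (simp add: inv_ereal)
  qed
qed

lemma lmap_range:
  assumes "lmin < lmax" "lmin \<le> x" "x \<le> lmax"
  shows "-1 \<le> lmap lmin lmax x" "lmap lmin lmax x \<le> 1"
  using assms unfolding lmap_def by (auto simp: field_simps)

lemma lmap_less: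
  assumes "lmin < lmax"
  shows "lmap lmin lmax x < lmap lmin lmax y \<longleftrightarrow> x < y"
  using assms unfolding lmap_def by (auto simp: divide_less_cancel)

lemma A_less:
  assumes l: "lmin < lmax" and x: "lmin \<le> x" "x \<le> lmax" and y: "lmin \<le> y" "y \<le> lmax"
  shows "arccos (lmap lmin lmax x) < arccos (lmap lmin lmax y) \<longleftrightarrow> y < x"
proof
  assume "y < x"
  then have "lmap lmin lmax y < lmap lmin lmax x" using lmap_less[OF l] by simp
  then show "arccos (lmap lmin lmax x) < arccos (lmap lmin lmax y)"
    using lmap_range[OF l x] lmap_range[OF l y] by (intro arccos_less_arccos) auto
next
  assume h: "arccos (lmap lmin lmax x) < arccos (lmap lmin lmax y)"
  show "y < x"
  proof (rule ccontr)
    assume "\<not> y < x"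
    then have "lmap lmin lmax x \<le> lmap lmin lmax y" using lmap_less[OF l, of y x] by auto
    then have "arccos (lmap lmin lmax y) \<le> arccos (lmap lmin lmax x)"
      using lmap_range[OF l x] lmap_range[OF l y] by (intro arccos_le_arccos) auto
    then show False using h by simp
  qed
qed

lemma A_eq:
  assumes l: "lmin < lmax" and x: "lmin \<le> x" "x \<le> lmax" and y: "lmin \<le> y" "y \<le> lmax"
  shows "arccos (lmap lmin lmax x) = arccos (lmap lmin lmax y) \<longleftrightarrow> x = y"
  using A_less[OF l x y] A_less[OF l y x] by (metis less_irrefl linorder_neqE_linordered_idom)

theorem theorem3p4:
  fixes A V :: "complex ^'n ^'n"
    and lam :: "'n \<Rightarrow> real"
    and lmin lmax a b m :: real
    and k k' :: nat
  assumes herm: "hermitian_mat A"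
    and unit: "unitary_mat V"
    and decomp: "A = V ** diag_mat (\<lambda>i. complex_of_real (lam i)) ** cadj V"
    and eig_range: "\<forall>i. lmin \<le> lam i \<and> lam i \<le> lmax"
    and lminmax: "lmin < lmax"
    and ab: "lmin \<le> a" "a < b" "b \<le> lmax"
    and m_pos: "0 < m"
    and k_pos: "1 \<le> k"
    and k'_range: "1 \<le> k'" "k' \<le> k"
  shows "ereal (spec_norm (mat_fun V lam (step_s a b) - mat_fun V lam (rho lmin lmax a b m k' k)))
    \<le> ereal (jackson_d m k' k / (pi * real (k' + 1)))
          * Max (range (\<lambda>i. Jfun (arccos (lmap lmin lmax a)) (arccos (lmap lmin lmax b))
                                  (arccos (lmap lmin lmax (lam i)))))
      + ereal (m * C_const m / real (k + 1))
          * Max (range (\<lambda>i. Jfun (arccos (lmap lmin lmax a)) (arccos (lmap lmin lmax b))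
                                  (arccos (lmap lmin lmax (lam i)))))
      + ereal (m * pi\<^sup>2 / (3 * real (k + 1)^2))"
proof -
  define al where "al = arccos (lmap lmin lmax a)"
  define be where "be = arccos (lmap lmin lmax b)"
  define th where "th i = arccos (lmap lmin lmax (lam i))" for i
  define Js where "Js = Max (range (\<lambda>i. Jfun al be (th i)))"
  define p where "p = jackson_d m k' k / (pi * real (k' + 1))"
  define q where "q = m * C_const m / real (k + 1)"
  define r where "r = m * pi\<^sup>2 / (3 * real (k + 1)^2)"
  have a_r: "lmin \<le> a" "a \<le> lmax" and b_r: "lmin \<le> b" "b \<le> lmax" using ab by auto
  have lam_r: "lmin \<le> lam i" "lam i \<le> lmax" for i using eig_range by auto
  have bal: "be < al" unfolding al_def be_def using A_less[OF lminmax b_r a_r] ab by simp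
  have al_r: "0 \<le> al" "al \<le> pi" unfolding al_def
    using lmap_range[OF lminmax a_r] by (auto intro: arccos_lbound arccos_ubound)
  have be_r: "0 \<le> be" "be \<le> pi" unfolding be_def
    using lmap_range[OF lminmax b_r] by (auto intro: arccos_lbound arccos_ubound)
  have th_r: "0 \<le> th i" "th i \<le> pi" for i unfolding th_def
    using lmap_range[OF lminmax lam_r[of i]] by (auto intro: arccos_lbound arccos_ubound)
  have fin: "finite (range (\<lambda>i. Jfun al be (th i)))" by simp
  have Js_ge: "Jfun al be (th i) \<le> Js" for i unfolding Js_def by (rule Max_ge[OF fin]) auto
  have p_pos: "p > 0" unfolding p_def using jd_pos[OF k'_range] by simp
  have C0: "0 \<le> C_const m"
    unfolding C_const_fC by (rule integral_nonneg[OF fC_integrable[OF m_pos]]) (auto intro: fC_nonneg)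
  have q0: "0 \<le> q" unfolding q_def using C0 m_pos by simp
  have r0: "0 \<le> r" unfolding r_def using m_pos by simp
  have goal_eq: "?thesis \<longleftrightarrow> ereal (spec_norm (mat_fun V lam (step_s a b) - mat_fun V lam (rho lmin lmax a b m k' k)))
     \<le> ereal p * Js + ereal q * Js + ereal r"
    unfolding p_def q_def r_def Js_def al_def be_def th_def by simp
  show ?thesis
  proof (cases "Js = \<infinity>")
    case True
    have "ereal q * Js \<ge> 0" using q0 True by simp
    then have h: "ereal p * Js + ereal q * Js + ereal r = \<infinity>" using True p_pos by simp
    show ?thesis unfolding goal_eq h by simp
  next
    case False
    have Jfin: "Jfun al be (th i) \<noteq> \<infinity>" for i using Js_ge[of i] False by auto
    have nex: "\<not> (th i = al \<and> al = pi)" "\<not> (th i = be \<and> be = 0)" for i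
      using J_infty[OF bal, of "th i"] Jfin[of i] by auto
    define Km where "Km = Max (range (\<lambda>i. Kf al be (th i)))"
    have finK: "finite (range (\<lambda>i. Kf al be (th i)))" by simp
    have Km_ge: "Kf al be (th i) \<le> Km" for i unfolding Km_def by (rule Max_ge[OF finK]) auto
    have "Km \<in> range (\<lambda>i. Kf al be (th i))" unfolding Km_def by (rule Max_in[OF finK]) simp
    then obtain i0 where i0: "Km = Kf al be (th i0)" by blast
    have KmJ: "ereal Km \<le> Js" unfolding i0
      using Kf_le_J[OF be_r(1) bal al_r(2), of "th i0"] Js_ge[of i0] by (rule order_trans)
    have scal: "\<bar>step_s a b (lam i) - rho lmin lmax a b m k' k (lam i)\<bar> \<le> p * Km + q * Km + r" for i
    proof -
      have c: "cos (th i) = lmap lmin lmax (lam i)" unfolding th_def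
        using lmap_range[OF lminmax lam_r[of i]] by (simp add: cos_arccos)
      have rho_eq: "rho lmin lmax a b m k' k (lam i) = (\<Sum>j=0..k'. cheb_c al be j * jackson_d m j k * cos (real j * th i))"
        unfolding rho_def al_def[symmetric] be_def[symmetric] c[symmetric] cheb_T_cos ..
      have s_eq: "step_s a b (lam i) = sval al be (th i)"
        unfolding step_s_def sval_def al_def be_def th_def
        using A_less[OF lminmax _ _ a_r, of "lam i"] A_less[OF lminmax b_r _ _, of "lam i"]
          A_eq[OF lminmax _ _ a_r, of "lam i"] A_eq[OF lminmax _ _ b_r, of "lam i"] lam_r[of i]
        by auto
      have "\<bar>step_s a b (lam i) - rho lmin lmax a b m k' k (lam i)\<bar> \<le> jackson_d m k' k * Kf al be (th i) / (pi * real (k'+1))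
          + m * C_const m * Kf al be (th i) / real (k+1) + m * pi^2 / (3 * real (k+1)^2)"
        unfolding rho_eq s_eq
        by (rule scalar_bound[OF m_pos k'_range be_r(1) bal al_r(2) th_r nex])
      also have "\<dots> = p * Kf al be (th i) + q * Kf al be (th i) + r" unfolding p_def q_def r_def by simp
      also have "\<dots> \<le> p * Km + q * Km + r"
        using Km_ge[of i] p_pos q0 by (intro add_mono mult_left_mono) auto
      finally show ?thesis .
    qed
    have "spec_norm (mat_fun V lam (step_s a b) - mat_fun V lam (rho lmin lmax a b m k' k)) \<le> p * Km + q * Km + r"
      by (rule spec_norm_bound[where f="step_s a b" and g="rho lmin lmax a b m k' k" and lam=lam, OF unit scal])
    then have "ereal (spec_norm (mat_fun V lam (step_s a b) - mat_fun V lam (rho lmin lmax a b m k' k)))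
       \<le> ereal p * ereal Km + ereal q * ereal Km + ereal r" by simp
    also have "\<dots> \<le> ereal p * Js + ereal q * Js + ereal r"
      using KmJ p_pos q0 by (intro add_mono ereal_mult_left_mono) auto
    finally show ?thesis unfolding goal_eq .
  qed
qed

end
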